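(* Let $\mathbb{T}$ be a finite set of $\delta$-tubes in $B_1\subset\mathbb{R}^n$ and let $\delta=\rho_M\le\rho_{M-1}\le\dots\le\rho_1\le\rho_0=1$. Suppose that for each $k$ there is a set $\mathbb{T}_{\rho_k}$ of $\rho_k$-tubes such that (i) $\mathbb{T}=\bigcup_{T_{\rho_k}\in\mathbb{T}_{\rho_k}}\mathbb{T}[T_{\rho_k}]$; (ii) the tubes of $\mathbb{T}_{\rho_k}$ are essentially distinct, so each $T\in\mathbb{T}$ lies in $\sim1$ tubes of $\mathbb{T}_{\rho_k}$; (iii) $|\mathbb{T}[T_{\rho_k}]|$ is constant up to a factor $\sim1$ as $T_{\rho_k}$ ranges over $\mathbb{T}_{\rho_k}$. Then \[\Delta_{max}(\mathbb{T})\le C(n)^M\prod_{m=1}^M\max_{T_{\rho_{m-1}}\in\mathbb{T}_{\rho_{m-1}}}\Delta_{max}\big(\mathbb{T}_{\rho_m}[T_{\rho_{m-1}}]\big),\] where $C(n)$ depends only on $n$.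
   Context: A $\rho$-tube is the $\rho$-neighbourhood of a unit segment; $B_1$ the unit ball. For a finite family $\mathbb{W}$ of convex sets and convex $K$: $\mathbb{W}[K]=\{W\in\mathbb{W}:W\subset K\}$, $\Delta(\mathbb{W},K)=\sum_{W\in\mathbb{W}[K]}|W|/|K|$, $\Delta_{max}(\mathbb{W})=\max_{K\text{ convex}}\Delta(\mathbb{W},K)$. Tubes are essentially distinct if no two are comparable.
   Formalization: Every tube of $\mathbb{T}_{\rho_k}$, for k from 1 to M, lies inside some tube of $\mathbb{T}_{\rho_{k-1}}$, and two $\rho$-tubes are comparable when each lies in the closed $\rho$-neighbourhood of the other. Apart from conventions, each condition added here is assumed in the paper as well or is needed for the statement above to hold. *)

theory Defs
  imports "HOL-Analysis.Analysis"
begin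

definition tube :: "real \<Rightarrow> 'a::euclidean_space set \<Rightarrow> bool" where
  "tube r T \<longleftrightarrow> (\<exists>a b. dist a b = 1 \<and> T = {x. infdist x (closed_segment a b) \<le> r})"

definition subfam :: "'a set set \<Rightarrow> 'a set \<Rightarrow> 'a set set" where
  "subfam W K = {V \<in> W. V \<subseteq> K}"

definition Delta :: "'a::euclidean_space set set \<Rightarrow> 'a set \<Rightarrow> real" where
  "Delta W K = (\<Sum>V\<in>subfam W K. measure lebesgue V) / measure lebesgue K"

definition Delta_max :: "'a::euclidean_space set set \<Rightarrow> real" where
  "Delta_max W = (SUP K\<in>{K. convex K}. Delta W K)"

definition comparable :: "real \<Rightarrow> 'a::euclidean_space set \<Rightarrow> 'a set \<Rightarrow> bool" where
  "comparable r T1 T2 \<longleftrightarrow>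
     T1 \<subseteq> {x. infdist x T2 \<le> r} \<and> T2 \<subseteq> {x. infdist x T1 \<le> r}"

definition ess_distinct :: "real \<Rightarrow> 'a::euclidean_space set set \<Rightarrow> bool" where
  "ess_distinct r W \<longleftrightarrow> (\<forall>T1\<in>W. \<forall>T2\<in>W. T1 \<noteq> T2 \<longrightarrow> \<not> comparable r T1 T2)"

end

theory Submission
  imports Defs
begin

lemma closed_E:
  fixes K Q :: "'a::euclidean_space set"
  assumes "closed K" "closed Q"
  shows "closed {p :: 'a \<times> 'a. snd p \<in> K \<and> snd p - fst p \<in> Q}"
proof -
  have "{p :: 'a \<times> 'a. snd p \<in> K \<and> snd p - fst p \<in> Q} = snd -` K \<inter> (\<lambda>p. snd p - fst p) -` Q"
    by auto
  moreover have "closed (snd -` K :: ('a\<times>'a) set)"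
    by (intro continuous_closed_vimage assms continuous_intros)
  moreover have "closed ((\<lambda>p. snd p - fst p) -` Q :: ('a\<times>'a) set)"
    by (intro continuous_closed_vimage assms continuous_intros)
  ultimately show ?thesis by auto
qed

lemma fubini_conv:
  fixes K Q :: "'a::euclidean_space set"
  assumes "compact K" "compact Q"
  shows "(\<integral>\<^sup>+x. emeasure lborel (K \<inter> (+) x ` Q) \<partial>lborel) = emeasure lborel K * emeasure lborel Q"
proof -
  let ?E = "{p :: 'a \<times> 'a. snd p \<in> K \<and> snd p - fst p \<in> Q}"
  have cE: "closed ?E" using closed_E assms compact_imp_closed by blast
  have E: "?E \<in> sets (lborel \<Otimes>\<^sub>M lborel)"
    unfolding lborel_prod using cE by (simp add: borel_closed)
  have PS: "pair_sigma_finite lborel (lborel :: 'a measure)"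
    by (simp add: pair_sigma_finite_def lborel.sigma_finite_measure_axioms)
  have sl1: "K \<inter> (+) x ` Q = {y \<in> K. y - x \<in> Q}" for x
    by (auto simp: image_iff) (metis add.commute diff_add_cancel)
  have sl2: "{x. y \<in> K \<and> y - x \<in> Q} = (if y \<in> K then (\<lambda>q. (-1) *\<^sub>R q + y) ` Q else {})" for y
    by (auto simp: image_iff) (metis add.commute diff_add_cancel minus_diff_eq uminus_add_conv_diff)
  have Qb: "(\<lambda>q. (-1) *\<^sub>R q + y) ` Q \<in> sets borel" for y
  proof -
    have "compact ((\<lambda>q. (-1) *\<^sub>R q + y) ` Q)"
      by (intro compact_continuous_image assms continuous_intros)
    then show ?thesis by (simp add: borel_compact)
  qed
  have meq: "emeasure lborel ((\<lambda>q. (-1) *\<^sub>R q + y) ` Q) = emeasure lborel Q" for y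
  proof -
    have "emeasure lebesgue ((\<lambda>q. (-1) *\<^sub>R q + y) ` Q) = emeasure lebesgue Q"
      using emeasure_lebesgue_affine[of "-1" y Q] by simp
    then show ?thesis using Qb[of y] assms(2)
      by (simp add: borel_compact)
  qed
  have meq2: "emeasure lborel ((-) y ` Q) = emeasure lborel Q" for y
    using meq[of y] by simp
  have "(\<integral>\<^sup>+x. emeasure lborel (K \<inter> (+) x ` Q) \<partial>lborel) = emeasure (lborel \<Otimes>\<^sub>M lborel) ?E"
    using lborel.emeasure_pair_measure_alt[OF E] by (simp add: sl1)
  also have "\<dots> = (\<integral>\<^sup>+y. emeasure lborel ((\<lambda>x. (x, y)) -` ?E) \<partial>lborel)"
    using pair_sigma_finite.emeasure_pair_measure_alt2[OF PS E] .
  also have "\<dots> = (\<integral>\<^sup>+y. emeasure lborel Q * indicator K y \<partial>lborel)"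
    by (intro nn_integral_cong) (simp add: sl2 meq2 split: split_indicator)
  also have "\<dots> = emeasure lborel Q * emeasure lborel K"
    by (rule nn_integral_cmult_indicator) (simp add: borel_compact assms(1))
  finally show ?thesis by (simp add: mult.commute)
qed

lemma em_leb: "S \<in> sets borel \<Longrightarrow> emeasure lebesgue S = emeasure lborel (S :: 'a::euclidean_space set)"
  by simp

lemma RS_ineq:
  fixes K Q :: "'a::euclidean_space set"
  assumes K: "compact K" "convex K" and Q: "compact Q" "convex Q"
  shows "measure lebesgue {k - q | k q. k \<in> K \<and> q \<in> Q} * measure lebesgue (K \<inter> (+) x0 ` Q)
     \<le> 4 ^ DIM('a) * measure lebesgue K * measure lebesgue Q"
proof -
  define D where "D = {k - q | k q. k \<in> K \<and> q \<in> Q}"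
  define H where "H = (\<lambda>x. (1/2::real) *\<^sub>R x + (1/2::real) *\<^sub>R x0) ` D"
  define A0 where "A0 = K \<inter> (+) x0 ` Q"
  define n where "n = DIM('a)"
  have cD: "compact D" unfolding D_def using compact_differences[OF K(1) Q(1)] by simp
  have cH: "compact H" unfolding H_def by (intro compact_continuous_image cD continuous_intros)
  have cA: "compact (K \<inter> (+) x ` Q)" for x
    by (intro compact_Int_closed K(1) compact_imp_closed compact_continuous_image Q(1) continuous_intros)
  have key: "ennreal ((1/2)^n) * emeasure lborel A0 \<le> emeasure lborel (K \<inter> (+) x ` Q)" if "x \<in> H" for x
  proof -
    obtain k q where kq: "k \<in> K" "q \<in> Q" "x = (1/2::real) *\<^sub>R (k - q) + (1/2::real) *\<^sub>R x0"
      using \<open>x \<in> H\<close> unfolding H_def D_def by auto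
    define I where "I = (\<lambda>y. (1/2::real) *\<^sub>R y + (1/2::real) *\<^sub>R k) ` A0"
    have sub: "I \<subseteq> K \<inter> (+) x ` Q"
    proof
      fix z assume "z \<in> I"
      then obtain y where y: "y \<in> K" "y - x0 \<in> Q" "z = (1/2::real) *\<^sub>R y + (1/2::real) *\<^sub>R k"
        unfolding I_def A0_def by (auto simp: image_iff)
      have "z \<in> K" using K(2) y kq by (simp add: convex_def)
      moreover have "(1/2::real) *\<^sub>R (y - x0) + (1/2::real) *\<^sub>R q \<in> Q"
        using Q(2) y kq by (simp add: convex_def)
      moreover have "z = x + ((1/2::real) *\<^sub>R (y - x0) + (1/2::real) *\<^sub>R q)"
        using y kq by (simp add: algebra_simps)
      ultimately show "z \<in> K \<inter> (+) x ` Q" by auto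
    qed
    have "emeasure lebesgue I = ennreal ((1/2)^n) * emeasure lebesgue A0"
      unfolding I_def n_def using emeasure_lebesgue_affine[of "1/2" "(1/2::real) *\<^sub>R k" A0]
      by simp
    also have "emeasure lebesgue A0 = emeasure lborel A0"
      unfolding A0_def using cA[of x0] by (simp add: borel_compact)
    finally have "ennreal ((1/2)^n) * emeasure lborel A0 = emeasure lebesgue I" ..
    also have "\<dots> \<le> emeasure lebesgue (K \<inter> (+) x ` Q)"
      using sub cA[of x] by (intro emeasure_mono) (auto simp: borel_compact)
    also have "\<dots> = emeasure lborel (K \<inter> (+) x ` Q)"
      using cA[of x] by (simp add: borel_compact)
    finally show ?thesis .
  qed
  have "ennreal ((1/2)^n) * emeasure lborel A0 * emeasure lborel H =
        (\<integral>\<^sup>+x. ennreal ((1/2)^n) * emeasure lborel A0 * indicator H x \<partial>lborel)"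
    using cH by (simp add: nn_integral_cmult_indicator borel_compact)
  also have "\<dots> \<le> (\<integral>\<^sup>+x. emeasure lborel (K \<inter> (+) x ` Q) \<partial>lborel)"
    using key by (intro nn_integral_mono) (auto split: split_indicator)
  also have "\<dots> = emeasure lborel K * emeasure lborel Q"
    using fubini_conv[OF K(1) Q(1)] .
  finally have ineq: "ennreal ((1/2)^n) * emeasure lborel A0 * emeasure lborel H \<le> emeasure lborel K * emeasure lborel Q" .
  have eH: "emeasure lborel H = ennreal ((1/2)^n) * emeasure lborel D"
  proof -
    have "emeasure lebesgue H = ennreal ((1/2)^n) * emeasure lebesgue D"
      unfolding H_def n_def using emeasure_lebesgue_affine[of "1/2" "(1/2::real) *\<^sub>R x0" D]
      by simp
    then show ?thesis using cH cD by (simp add: borel_compact)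
  qed
  have fin: "emeasure lborel S = ennreal (measure lebesgue S)" if "compact S" for S :: "'a set"
    using emeasure_compact_finite[OF that] that
    by (simp add: borel_compact emeasure_eq_ennreal_measure)
  have "ennreal ((1/2)^n * measure lebesgue A0 * ((1/2)^n * measure lebesgue D)) \<le> ennreal (measure lebesgue K * measure lebesgue Q)"
    using ineq unfolding eH fin[OF cD] fin[OF cA[of x0], folded A0_def] fin[OF K(1)] fin[OF Q(1)]
    by (simp add: ennreal_mult')
  note E1 = this
  have "(1/2)^n * measure lebesgue A0 * ((1/2)^n * measure lebesgue D) \<le> measure lebesgue K * measure lebesgue Q"
    using E1 by (subst (asm) ennreal_le_iff) auto
  then have "measure lebesgue A0 * measure lebesgue D \<le> 4^n * (measure lebesgue K * measure lebesgue Q)"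
    by (simp add: field_simps power_mult_distrib[symmetric])
  then show ?thesis unfolding D_def A0_def n_def by (simp add: mult.commute mult.left_commute)
qed

lemma mem_nb:
  fixes a b :: "'a::euclidean_space"
  shows "infdist x (closed_segment a b) \<le> r \<longleftrightarrow> (\<exists>y\<in>closed_segment a b. dist x y \<le> r)"
proof
  assume "infdist x (closed_segment a b) \<le> r"
  moreover obtain y where "y \<in> closed_segment a b" "infdist x (closed_segment a b) = dist x y"
    using infdist_attains_inf[of "closed_segment a b" x] by auto
  ultimately show "\<exists>y\<in>closed_segment a b. dist x y \<le> r" by auto
next
  assume "\<exists>y\<in>closed_segment a b. dist x y \<le> r"
  then show "infdist x (closed_segment a b) \<le> r" using infdist_le2 by blast
qed

lemma nb_compact:
  fixes a b :: "'a::euclidean_space"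
  shows "compact {x. infdist x (closed_segment a b) \<le> r}"
proof -
  have "closed {x. infdist x (closed_segment a b) \<le> r}"
    by (intro closed_Collect_le continuous_intros continuous_on_const continuous_at_imp_continuous_on)
       (simp add: continuous_infdist continuous_ident)
  moreover have "{x. infdist x (closed_segment a b) \<le> r} \<subseteq> cball a (dist a b + r)"
  proof
    fix x assume "x \<in> {x. infdist x (closed_segment a b) \<le> r}"
    then have "infdist x (closed_segment a b) \<le> r" by simp
    then obtain y where "y \<in> closed_segment a b" "dist x y \<le> r" using mem_nb[of x a b r] by blast
    moreover have "dist y a \<le> dist a b" using dist_in_closed_segment[OF \<open>y \<in> _\<close>] by simp
    ultimately show "x \<in> cball a (dist a b + r)"
      by (simp add: dist_commute) (smt (verit) dist_commute dist_triangle)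
  qed
  ultimately show ?thesis using bounded_cball bounded_subset compact_eq_bounded_closed by blast
qed

lemma nb_convex:
  fixes a b :: "'a::euclidean_space"
  shows "convex {x. infdist x (closed_segment a b) \<le> r}"
  unfolding convex_def
proof (intro allI impI ballI, clarsimp)
  fix x1 x2 :: 'a and u v :: real
  assume h: "infdist x1 (closed_segment a b) \<le> r" "infdist x2 (closed_segment a b) \<le> r"
     "0 \<le> u" "0 \<le> v" "u + v = 1"
  obtain y1 where y1: "y1 \<in> closed_segment a b" "dist x1 y1 \<le> r" using h(1) mem_nb by blast
  obtain y2 where y2: "y2 \<in> closed_segment a b" "dist x2 y2 \<le> r" using h(2) mem_nb by blast
  have ys: "u *\<^sub>R y1 + v *\<^sub>R y2 \<in> closed_segment a b"
    using convex_closed_segment[of a b] y1 y2 h by (simp add: convex_def)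
  have "dist (u *\<^sub>R x1 + v *\<^sub>R x2) (u *\<^sub>R y1 + v *\<^sub>R y2) = norm (u *\<^sub>R (x1 - y1) + v *\<^sub>R (x2 - y2))"
    by (simp add: dist_norm algebra_simps)
  also have "\<dots> \<le> u * norm (x1 - y1) + v * norm (x2 - y2)"
    using norm_triangle_ineq[of "u *\<^sub>R (x1 - y1)" "v *\<^sub>R (x2 - y2)"] h by simp
  also have "\<dots> \<le> u * r + v * r"
    using y1 y2 h by (intro add_mono mult_left_mono) (auto simp: dist_norm)
  also have "\<dots> = r" using h by algebra
  finally show "infdist (u *\<^sub>R x1 + v *\<^sub>R x2) (closed_segment a b) \<le> r"
    using ys mem_nb by blast
qed

lemma nb_cball:
  fixes a b :: "'a::euclidean_space"
  assumes "y \<in> closed_segment a b"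
  shows "cball y r \<subseteq> {x. infdist x (closed_segment a b) \<le> r}"
  using assms mem_nb by (fastforce simp: dist_commute)

lemma nb_seg:
  fixes a b :: "'a::euclidean_space"
  assumes "0 \<le> r"
  shows "closed_segment a b \<subseteq> {x. infdist x (closed_segment a b) \<le> r}"
  using assms by auto

lemma seg_param:
  fixes c d :: "'a::euclidean_space"
  shows "y \<in> closed_segment c d \<longleftrightarrow> (\<exists>s. 0 \<le> s \<and> s \<le> 1 \<and> y = c + s *\<^sub>R (d - c))"
  unfolding closed_segment_def by (auto simp: algebra_simps)

lemma dist_param:
  fixes c v :: "'a::euclidean_space"
  assumes "norm v = 1"
  shows "dist (c + s *\<^sub>R v) (c + t *\<^sub>R v) = \<bar>s - t\<bar>"
proof -
  have "c + s *\<^sub>R v - (c + t *\<^sub>R v) = (s - t) *\<^sub>R v" by (simp add: algebra_simps)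
  then show ?thesis using assms by (simp add: dist_norm)
qed

lemma G0:
  fixes a b c d :: "'a::euclidean_space"
  assumes ab: "dist a b = 1" and v: "norm (d - c) = 1"
    and s: "0 \<le> sa" "sa \<le> sb" "sb \<le> 1"
    and da: "dist a (c + sa *\<^sub>R (d - c)) \<le> \<rho>" and db: "dist b (c + sb *\<^sub>R (d - c)) \<le> \<rho>"
    and t: "0 \<le> s" "s \<le> 1"
  shows "\<exists>y\<in>closed_segment a b. dist (c + s *\<^sub>R (d - c)) y \<le> 3 * \<rho>"
proof -
  let ?p = "\<lambda>t. c + t *\<^sub>R (d - c)"
  have dp: "dist (?p x) (?p y) = \<bar>x - y\<bar>" for x y using dist_param[OF v] .
  have "dist a b \<le> dist a (?p sa) + dist (?p sa) (?p sb) + dist (?p sb) b"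
    using dist_triangle[of a b "?p sa"] dist_triangle[of "?p sa" b "?p sb"] by linarith
  then have gap: "1 - 2 * \<rho> \<le> sb - sa" using ab da db dp[of sa sb] s v by (simp add: dist_commute)
  consider "s \<le> sa" | "sb \<le> s" | "sa < s \<and> s < sb" by linarith
  then show ?thesis
  proof cases
    case 1
    have "dist (?p s) a \<le> dist (?p s) (?p sa) + dist (?p sa) a" by (rule dist_triangle)
    also have "\<dots> \<le> 3 * \<rho>" using dp[of s sa] 1 gap s da t v by (simp add: dist_commute)
    finally show ?thesis by auto
  next
    case 2
    have "dist (?p s) b \<le> dist (?p s) (?p sb) + dist (?p sb) b" by (rule dist_triangle)
    also have "\<dots> \<le> 3 * \<rho>" using dp[of s sb] 2 gap s db t v by (simp add: dist_commute)
    finally show ?thesis by auto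
  next
    case 3
    define u where "u = (s - sa) / (sb - sa)"
    have u: "0 \<le> u" "u \<le> 1" using 3 by (auto simp: u_def field_simps)
    have h: "u * (sb - sa) = s - sa" unfolding u_def using 3 by (simp add: field_simps)
    have su: "s = (1 - u) * sa + u * sb" using h by (simp add: algebra_simps)
    have pe: "?p s = (1 - u) *\<^sub>R ?p sa + u *\<^sub>R ?p sb"
      by (simp add: su algebra_simps)
    have ym: "(1 - u) *\<^sub>R a + u *\<^sub>R b \<in> closed_segment a b"
      using u unfolding closed_segment_def by auto
    have "dist (?p s) ((1 - u) *\<^sub>R a + u *\<^sub>R b) = norm ((1 - u) *\<^sub>R (?p sa - a) + u *\<^sub>R (?p sb - b))"
      unfolding pe dist_norm by (simp add: algebra_simps)
    also have "\<dots> \<le> (1 - u) * norm (?p sa - a) + u * norm (?p sb - b)"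
      using norm_triangle_ineq[of "(1 - u) *\<^sub>R (?p sa - a)" "u *\<^sub>R (?p sb - b)"] u by simp
    also have "\<dots> \<le> (1 - u) * \<rho> + u * \<rho>"
      using da db u by (intro add_mono mult_left_mono) (auto simp: dist_norm norm_minus_commute)
    also have "\<dots> \<le> 3 * \<rho>" using order_trans[OF zero_le_dist da] by (simp add: algebra_simps)
    finally show ?thesis using ym by blast
  qed
qed

lemma G1:
  fixes a b c d :: "'a::euclidean_space"
  assumes ab: "dist a b = 1" and cd: "dist c d = 1"
    and a: "infdist a (closed_segment c d) \<le> \<rho>" and b: "infdist b (closed_segment c d) \<le> \<rho>"
    and p: "p \<in> closed_segment c d"
  shows "\<exists>y\<in>closed_segment a b. dist p y \<le> 3 * \<rho>"
proof -
  have v: "norm (d - c) = 1" using cd by (simp add: dist_norm norm_minus_commute)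
  obtain ya where ya: "ya \<in> closed_segment c d" "dist a ya \<le> \<rho>" using a mem_nb by blast
  obtain yb where yb: "yb \<in> closed_segment c d" "dist b yb \<le> \<rho>" using b mem_nb by blast
  obtain sa where sa: "0 \<le> sa" "sa \<le> 1" "ya = c + sa *\<^sub>R (d - c)" using ya seg_param by blast
  obtain sb where sb: "0 \<le> sb" "sb \<le> 1" "yb = c + sb *\<^sub>R (d - c)" using yb seg_param by blast
  obtain s where s: "0 \<le> s" "s \<le> 1" "p = c + s *\<^sub>R (d - c)" using p seg_param by blast
  show ?thesis
  proof (cases "sa \<le> sb")
    case True
    then show ?thesis using G0[OF ab v sa(1) True sb(2) _ _ s(1,2), of \<rho>] ya yb sa sb s by auto
  next
    case False
    have ba: "dist b a = 1" using ab by (simp add: dist_commute)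
    show ?thesis using G0[OF ba v sb(1) _ sa(2) _ _ s(1,2), of \<rho>] False ya yb sa sb s
      by (auto simp: closed_segment_commute)
  qed
qed

lemma tube_sub:
  fixes a b c d :: "'a::euclidean_space"
  assumes ab: "dist a b = 1" and cd: "dist c d = 1" and "0 \<le> \<rho>"
    and a: "infdist a (closed_segment c d) \<le> \<rho>" and b: "infdist b (closed_segment c d) \<le> \<rho>"
    and K: "closed_segment a b \<subseteq> K"
  shows "{x. infdist x (closed_segment c d) \<le> \<rho>} \<subseteq> {k + z | k z. k \<in> K \<and> z \<in> cball 0 (4 * \<rho>)}"
proof
  fix x assume "x \<in> {x. infdist x (closed_segment c d) \<le> \<rho>}"
  then have "infdist x (closed_segment c d) \<le> \<rho>" by simp
  then obtain p where p: "p \<in> closed_segment c d" "dist x p \<le> \<rho>" using mem_nb by blast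
  obtain y where y: "y \<in> closed_segment a b" "dist p y \<le> 3 * \<rho>" using G1[OF ab cd a b p(1)] by blast
  have "dist x y \<le> 4 * \<rho>" using p y dist_triangle[of x y p] by linarith
  then have "x - y \<in> cball 0 (4 * \<rho>)" by (simp add: dist_norm norm_minus_commute)
  moreover have "x = y + (x - y)" by simp
  ultimately show "x \<in> {k + z | k z. k \<in> K \<and> z \<in> cball 0 (4 * \<rho>)}" using y K by blast
qed

lemma align_lemma:
  fixes p u :: "'a::euclidean_space"
  assumes "norm u = 1" "norm p \<le> e" "inner p u \<ge> e"
  shows "p = e *\<^sub>R u"
proof -
  have ip: "inner p u \<le> norm p" using norm_cauchy_schwarz[of p u] assms(1) by simp
  have "inner (p - e *\<^sub>R u) (p - e *\<^sub>R u) = inner p p - 2 * e * inner p u + e * e * inner u u"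
    by (simp add: inner_diff_left inner_diff_right algebra_simps inner_commute)
  also have "inner u u = 1" using assms(1) by (simp add: norm_eq_sqrt_inner)
  also have "inner p p = norm p ^ 2" by (simp add: power2_norm_eq_inner)
  finally have eq: "inner (p - e *\<^sub>R u) (p - e *\<^sub>R u) = norm p ^ 2 - 2 * e * inner p u + e * e" by simp
  have n: "norm p = e" using ip assms by linarith
  have i: "inner p u = e" using ip assms by linarith
  have "inner (p - e *\<^sub>R u) (p - e *\<^sub>R u) = 0" using eq n i by (simp add: power2_eq_square)
  then show ?thesis by simp
qed

lemma tube_eq:
  fixes a b c d :: "'a::euclidean_space"
  assumes \<delta>: "0 < \<delta>" and ab: "dist a b = 1" and cd: "dist c d = 1"
    and sub: "{x. infdist x (closed_segment a b) \<le> \<delta>} \<subseteq> {x. infdist x (closed_segment c d) \<le> \<delta>}"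
  shows "{x. infdist x (closed_segment a b) \<le> \<delta>} = {x. infdist x (closed_segment c d) \<le> \<delta>}"
proof -
  define u where "u = b - a"
  have nu: "norm u = 1" using ab by (simp add: u_def dist_norm norm_minus_commute)
  have v: "norm (d - c) = 1" using cd by (simp add: dist_norm norm_minus_commute)
  define P1 where "P1 = a - \<delta> *\<^sub>R u"
  define P2 where "P2 = b + \<delta> *\<^sub>R u"
  have "dist P1 a \<le> \<delta>" using nu \<delta> by (simp add: P1_def dist_norm)
  then have "infdist P1 (closed_segment a b) \<le> \<delta>" using mem_nb by fastforce
  then have "infdist P1 (closed_segment c d) \<le> \<delta>" using sub by auto
  then obtain y where y: "y \<in> closed_segment c d" "dist P1 y \<le> \<delta>" using mem_nb by blast
  have "dist P2 b \<le> \<delta>" using nu \<delta> by (simp add: P2_def dist_norm)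
  then have "infdist P2 (closed_segment a b) \<le> \<delta>" using mem_nb by fastforce
  then have "infdist P2 (closed_segment c d) \<le> \<delta>" using sub by auto
  then obtain y' where y': "y' \<in> closed_segment c d" "dist P2 y' \<le> \<delta>" using mem_nb by blast
  obtain s where s: "0 \<le> s" "s \<le> 1" "y = c + s *\<^sub>R (d - c)" using y seg_param by blast
  obtain s' where s': "0 \<le> s'" "s' \<le> 1" "y' = c + s' *\<^sub>R (d - c)" using y' seg_param by blast
  have dyy: "norm (y' - y) \<le> 1" using dist_param[OF v, of c s' s] s s' by (simp add: dist_norm)
  define p where "p = y - P1"
  define q where "q = y' - y"
  define r where "r = P2 - y'"
  have sum: "p + q + r = u + \<delta> *\<^sub>R u + \<delta> *\<^sub>R u"
    by (simp add: p_def q_def r_def P1_def P2_def u_def algebra_simps)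
  have uu: "inner u u = 1" using nu by (simp add: norm_eq_sqrt_inner)
  have "inner (p + q + r) u = 1 + 2 * \<delta>" unfolding sum using uu by (simp add: inner_add_left)
  then have isum: "inner p u + inner q u + inner r u = 1 + 2 * \<delta>" by (simp add: inner_add_left)
  have np: "norm p \<le> \<delta>" using y by (simp add: p_def dist_norm norm_minus_commute)
  have nr: "norm r \<le> \<delta>" using y' by (simp add: r_def dist_norm)
  have nq: "norm q \<le> 1" using dyy by (simp add: q_def)
  have ip: "inner p u \<le> norm p" "inner q u \<le> norm q" "inner r u \<le> norm r"
    using norm_cauchy_schwarz[of _ u] nu by auto
  have "p = \<delta> *\<^sub>R u" using align_lemma[OF nu np] isum ip nq nr by linarith
  then have ya: "y = a" by (simp add: p_def P1_def)
  have "r = \<delta> *\<^sub>R u" using align_lemma[OF nu nr] isum ip nq np by linarith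
  then have yb: "y' = b" by (simp add: r_def P2_def)
  have "dist y y' = \<bar>s - s'\<bar>" by (simp only: s(3) s'(3) dist_param[OF v])
  then have "\<bar>s - s'\<bar> = 1" using ya yb ab by simp
  then have "(s = 0 \<and> s' = 1) \<or> (s = 1 \<and> s' = 0)" using s s' by linarith
  then have "closed_segment a b = closed_segment c d"
    using ya yb s s' by (auto simp: closed_segment_commute)
  then show ?thesis by (simp only:)
qed

lemma tube1_not_in_ball:
  fixes T :: "'a::euclidean_space set"
  assumes "tube 1 T"
  shows "\<not> T \<subseteq> ball 0 1"
proof
  assume sub: "T \<subseteq> ball 0 1"
  obtain a b where T: "dist a b = 1" "T = {x. infdist x (closed_segment a b) \<le> 1}"
    using assms unfolding tube_def by blast
  obtain e :: 'a where e: "e \<in> Basis" using nonempty_Basis by blast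
  have ne: "norm e = 1" using e by simp
  have "cball a 1 \<subseteq> T" using T nb_cball[of a a b 1] by auto
  moreover have "a + e \<in> cball a 1" "a - e \<in> cball a 1" using ne by (auto simp: dist_norm)
  ultimately have "a + e \<in> T" "a - e \<in> T" by blast+
  then have "a + e \<in> ball 0 1" "a - e \<in> ball 0 1" using sub by blast+
  then have "norm (a + e) < 1" "norm (a - e) < 1" by simp_all
  moreover have "norm ((a + e) - (a - e)) \<le> norm (a + e) + norm (a - e)" by (rule norm_triangle_ineq4)
  moreover have "(a + e) - (a - e) = 2 *\<^sub>R e" by (simp add: algebra_simps scaleR_2)
  ultimately show False using ne by simp
qed

lemma pos_fmeas:
  assumes pos: "0 < measure lebesgue K" shows "K \<in> lmeasurable"
proof -
  have "K \<in> sets lebesgue" using pos measure_notin_sets by force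
  moreover have "emeasure lebesgue K \<noteq> \<infinity>" using pos measure_zero_top by force
  ultimately show ?thesis by (simp add: fmeasurableI less_top)
qed

lemma sum_subfam_nonneg: "0 \<le> (\<Sum>V\<in>subfam W K. measure lebesgue V)"
  by (simp add: sum_nonneg)

lemma Delta_nonneg: "0 \<le> Delta W K"
  unfolding Delta_def by (simp add: sum_nonneg)

lemma Delta_le_card:
  assumes "finite W" "\<forall>V\<in>W. V \<in> sets lebesgue"
  shows "Delta W K \<le> real (card W)"
proof (cases "measure lebesgue K = 0")
  case True then show ?thesis by (simp add: Delta_def)
next
  case False
  then have pos: "0 < measure lebesgue K" using measure_nonneg[of lebesgue K] by linarith
  then have Kf: "K \<in> lmeasurable" by (rule pos_fmeas)
  have fs: "finite (subfam W K)" using assms(1) by (simp add: subfam_def)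
  have "(\<Sum>V\<in>subfam W K. measure lebesgue V) \<le> (\<Sum>V\<in>subfam W K. measure lebesgue K)"
    using assms(2) Kf by (intro sum_mono measure_mono_fmeasurable) (auto simp: subfam_def)
  also have "\<dots> = real (card (subfam W K)) * measure lebesgue K" by simp
  also have "\<dots> \<le> real (card W) * measure lebesgue K"
    using assms(1) by (intro mult_right_mono) (auto simp: subfam_def intro!: card_mono)
  finally show ?thesis using pos by (simp add: Delta_def divide_le_eq)
qed

lemma bdd_Delta:
  assumes "finite W" "\<forall>V\<in>W. V \<in> sets lebesgue"
  shows "bdd_above ((\<lambda>K. Delta W K) ` {K. convex K})"
  using Delta_le_card[OF assms] by (auto intro!: bdd_aboveI2)

lemma Delta_le_max:
  assumes "finite W" "\<forall>V\<in>W. V \<in> sets lebesgue" "convex K"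
  shows "Delta W K \<le> Delta_max W"
  unfolding Delta_max_def using bdd_Delta[OF assms(1,2)] assms(3) by (auto intro: cSUP_upper)

lemma Delta_max_nonneg:
  assumes "finite W" "\<forall>V\<in>W. V \<in> sets lebesgue"
  shows "0 \<le> Delta_max W"
  using Delta_le_max[OF assms, of "{}"] Delta_nonneg[of W "{}"] by simp

lemma Delta_max_le:
  assumes "\<And>K. convex K \<Longrightarrow> Delta W K \<le> X"
  shows "Delta_max W \<le> X"
  unfolding Delta_max_def
proof (rule cSUP_least)
  show "{K. convex K} \<noteq> {}" using convex_empty by blast
qed (use assms in auto)

lemma Delta_max_mono:
  assumes "finite W'" "\<forall>V\<in>W'. V \<in> sets lebesgue" "W \<subseteq> W'"
  shows "Delta_max W \<le> Delta_max W'"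
proof (rule Delta_max_le)
  fix K :: "'a set" assume K: "convex K"
  have "(\<Sum>V\<in>subfam W K. measure lebesgue V) \<le> (\<Sum>V\<in>subfam W' K. measure lebesgue V)"
    using assms by (intro sum_mono2) (auto simp: subfam_def)
  then have "Delta W K \<le> Delta W' K"
    unfolding Delta_def by (simp add: divide_right_mono)
  also have "\<dots> \<le> Delta_max W'" using Delta_le_max[OF assms(1,2) K] .
  finally show "Delta W K \<le> Delta_max W'" .
qed

lemma reduction:
  fixes W :: "'a::euclidean_space set set"
  assumes fin: "finite W" and cW: "\<forall>V\<in>W. compact V" and X: "0 \<le> X"
    and H: "\<And>K. compact K \<Longrightarrow> convex K \<Longrightarrow> (\<Sum>V\<in>subfam W K. measure lebesgue V) \<le> X * measure lebesgue K"
  shows "Delta_max W \<le> X"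
proof (rule Delta_max_le)
  fix K :: "'a set" assume K: "convex K"
  show "Delta W K \<le> X"
  proof (cases "measure lebesgue K = 0")
    case True then show ?thesis using X by (simp add: Delta_def)
  next
    case False
    then have pos: "0 < measure lebesgue K" using measure_nonneg[of lebesgue K] by linarith
    then have Kf: "K \<in> lmeasurable" by (rule pos_fmeas)
    have "bounded (\<Union>W)" using bounded_Union[OF fin] cW compact_imp_bounded by blast
    then obtain R where R0: "\<forall>x\<in>\<Union>W. norm x \<le> R" unfolding bounded_iff by blast
    then have R: "\<Union>W \<subseteq> cball 0 R" by auto
    define K1 where "K1 = closure (K \<inter> cball 0 R)"
    have bK: "bounded (K \<inter> cball 0 R)" by (simp add: bounded_Int)
    have cK1: "compact K1" unfolding K1_def using bK by (simp add: compact_closure)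
    have vK1: "convex K1" unfolding K1_def using K by (simp add: convex_Int convex_closure)
    have sub: "subfam W K \<subseteq> subfam W K1"
      using R closure_subset[of "K \<inter> cball 0 R"] by (auto simp: subfam_def K1_def)
    have mK1: "measure lebesgue K1 = measure lebesgue (K \<inter> cball 0 R)"
      unfolding K1_def using bK by (intro measure_closure negligible_convex_frontier convex_Int K convex_cball)
    also have "\<dots> \<le> measure lebesgue K"
      using Kf by (intro measure_mono_fmeasurable) auto
    finally have mle: "measure lebesgue K1 \<le> measure lebesgue K" .
    have "(\<Sum>V\<in>subfam W K. measure lebesgue V) \<le> (\<Sum>V\<in>subfam W K1. measure lebesgue V)"
      using fin sub by (intro sum_mono2) (auto simp: subfam_def)
    also have "\<dots> \<le> X * measure lebesgue K1" using H[OF cK1 vK1] .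
    also have "\<dots> \<le> X * measure lebesgue K" using mle X by (simp add: mult_left_mono)
    finally show ?thesis using pos by (simp add: Delta_def divide_le_eq)
  qed
qed

lemma tube_facts:
  fixes S :: "'a::euclidean_space set"
  assumes "tube r S" "0 \<le> r"
  shows "compact S" "convex S" "S \<in> sets lebesgue"
    "\<exists>c d. dist c d = 1 \<and> S = {x. infdist x (closed_segment c d) \<le> r}"
    "\<exists>a b. dist a b = 1 \<and> closed_segment a b \<subseteq> S"
proof -
  obtain c d where cd: "dist c d = 1" "S = {x. infdist x (closed_segment c d) \<le> r}"
    using assms(1) unfolding tube_def by blast
  show "compact S" using cd nb_compact by simp
  then show "S \<in> sets lebesgue" by (simp add: lmeasurable_compact fmeasurableD)
  show "convex S" using cd nb_convex by simp
  show "\<exists>c d. dist c d = 1 \<and> S = {x. infdist x (closed_segment c d) \<le> r}" using cd by blast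
  show "\<exists>a b. dist a b = 1 \<and> closed_segment a b \<subseteq> S" using cd nb_seg[OF assms(2)] by blast
qed

lemma per_tube_RS:
  fixes K S :: "'a::euclidean_space set"
  assumes K: "compact K" "convex K" and \<rho>: "0 < \<rho>"
    and cd: "dist c d = 1" and S: "S = {x. infdist x (closed_segment c d) \<le> \<rho>}"
  shows "measure lebesgue (K \<inter> S) * measure lebesgue {k + z | k z. k \<in> K \<and> z \<in> cball 0 (4 * \<rho>)}
           \<le> 16 ^ DIM('a) * measure lebesgue K * measure lebesgue S"
proof -
  define Q where "Q = (\<lambda>x. 4 *\<^sub>R x + (- 4 *\<^sub>R c)) ` S"
  have cS: "compact S" "convex S" using S nb_compact nb_convex by auto
  have cQ: "compact Q" unfolding Q_def by (intro compact_continuous_image cS continuous_intros)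
  have Qeq: "Q = (\<lambda>x. (- 4 *\<^sub>R c) + 4 *\<^sub>R x) ` S" unfolding Q_def by (simp add: add.commute)
  have vQ: "convex Q" unfolding Qeq by (intro convex_affinity cS)
  have mQ: "measure lebesgue Q = 4 ^ DIM('a) * measure lebesgue S"
    unfolding Q_def using measure_lebesgue_affine[of 4 "- 4 *\<^sub>R c" S] by simp
  have cin: "c \<in> S" using S \<rho> by auto
  have S_sub: "S \<subseteq> (+) c ` Q"
  proof
    fix x assume x: "x \<in> S"
    define y where "y = (3/4::real) *\<^sub>R c + (1/4::real) *\<^sub>R x"
    have "y \<in> S" using cS(2) cin x unfolding y_def convex_def by auto
    moreover have "x = c + (4 *\<^sub>R y + (- 4 *\<^sub>R c))"
      using scaleR_left_distrib[of 1 3 c] by (simp add: y_def algebra_simps)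
    ultimately show "x \<in> (+) c ` Q" unfolding Q_def by blast
  qed
  define D where "D = {k - q | k q. k \<in> K \<and> q \<in> Q}"
  define K' where "K' = {k + z | k z. k \<in> K \<and> z \<in> cball 0 (4 * \<rho>)}"
  have K'_sub: "K' \<subseteq> D"
  proof
    fix x assume "x \<in> K'"
    then obtain k z where kz: "k \<in> K" "z \<in> cball 0 (4 * \<rho>)" "x = k + z" unfolding K'_def by blast
    define y where "y = c - (1/4::real) *\<^sub>R z"
    have "y \<in> cball c \<rho>" using kz(2) by (simp add: y_def dist_norm)
    then have "y \<in> S" using nb_cball[of c c d \<rho>] S by auto
    then have "4 *\<^sub>R y + (- 4 *\<^sub>R c) \<in> Q" unfolding Q_def by blast
    moreover have "x = k - (4 *\<^sub>R y + (- 4 *\<^sub>R c))" using kz(3) by (simp add: y_def algebra_simps)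
    ultimately show "x \<in> D" unfolding D_def using kz(1) by blast
  qed
  have cD: "compact D" unfolding D_def using compact_differences[OF K(1) cQ] by simp
  have cK': "compact K'" unfolding K'_def using compact_sums[OF K(1) compact_cball[of 0 "4 * \<rho>"]] by (simp only:)
  have cKQ: "compact (K \<inter> (+) c ` Q)"
    by (intro compact_Int_closed K(1) compact_imp_closed compact_continuous_image cQ continuous_intros)
  have m1: "measure lebesgue K' \<le> measure lebesgue D"
    using K'_sub cD cK' by (intro measure_mono_fmeasurable) (auto simp: lmeasurable_compact fmeasurableD)
  have m2: "measure lebesgue (K \<inter> S) \<le> measure lebesgue (K \<inter> (+) c ` Q)"
    using S_sub cKQ cS(1) K(1)
    by (intro measure_mono_fmeasurable) (auto simp: lmeasurable_compact fmeasurableD compact_Int)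
  have "measure lebesgue (K \<inter> S) * measure lebesgue K' \<le> measure lebesgue (K \<inter> (+) c ` Q) * measure lebesgue D"
    using m1 m2 by (intro mult_mono) auto
  also have "\<dots> \<le> 4 ^ DIM('a) * measure lebesgue K * measure lebesgue Q"
    using RS_ineq[OF K cQ vQ, of c] unfolding D_def by (simp add: mult.commute)
  also have "\<dots> = 16 ^ DIM('a) * measure lebesgue K * measure lebesgue S"
    unfolding mQ by (simp add: power_mult_distrib[symmetric])
  finally show ?thesis unfolding K'_def .
qed

lemma subfam_subfam: "subfam (subfam W S) (K \<inter> S) = subfam W (K \<inter> S)"
  by (auto simp: subfam_def)

lemma two_scale:
  fixes W Tr :: "'a::euclidean_space set set"
  assumes finW: "finite W" and finT: "finite Tr"
    and cW: "\<forall>V\<in>W. compact V \<and> (\<exists>a b. dist a b = 1 \<and> closed_segment a b \<subseteq> V)"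
    and tT: "\<forall>S\<in>Tr. tube \<rho> S" and \<rho>: "0 < \<rho>"
    and cov: "\<forall>V\<in>W. \<exists>S\<in>Tr. V \<subseteq> S"
    and F: "\<forall>S\<in>Tr. Delta_max (subfam W S) \<le> F" and F0: "0 \<le> F"
  shows "Delta_max W \<le> 16 ^ DIM('a) * Delta_max Tr * F"
proof -
  have Tm: "\<forall>S\<in>Tr. S \<in> sets lebesgue" using tT tube_facts(3) \<rho> by (meson less_imp_le)
  have Wm: "\<forall>V\<in>W. V \<in> sets lebesgue" using cW by (simp add: fmeasurableD lmeasurable_compact)
  have Dm0: "0 \<le> Delta_max Tr" using Delta_max_nonneg[OF finT Tm] .
  define A :: real where "A = 16 ^ DIM('a)"
  have A0: "0 \<le> A" by (simp add: A_def)
  show ?thesis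
  proof (rule reduction[OF finW])
    show "\<forall>V\<in>W. compact V" using cW by blast
    show "0 \<le> 16 ^ DIM('a) * Delta_max Tr * F" using Dm0 F0 by simp
  next
    fix K :: "'a set" assume cK: "compact K" and vK: "convex K"
    have Kf: "K \<in> lmeasurable" using cK by (simp add: lmeasurable_compact)
    show "(\<Sum>V\<in>subfam W K. measure lebesgue V) \<le> 16 ^ DIM('a) * Delta_max Tr * F * measure lebesgue K"
    proof (cases "measure lebesgue K = 0")
      case True
      have "(\<Sum>V\<in>subfam W K. measure lebesgue V) \<le> (\<Sum>V\<in>subfam W K. 0)"
        using Wm Kf True by (intro sum_mono) (metis (no_types, lifting) measure_mono_fmeasurable mem_Collect_eq subfam_def)
      then show ?thesis using True by simp
    next
      case False
      then have pos: "0 < measure lebesgue K" using measure_nonneg[of lebesgue K] by linarith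
      define K' where "K' = {k + z | k z. k \<in> K \<and> z \<in> cball 0 (4 * \<rho>)}"
      have cK': "compact K'" unfolding K'_def using compact_sums[OF cK compact_cball[of 0 "4 * \<rho>"]] by (simp only:)
      have eqK': "K' = (\<Union>x\<in>K. \<Union>y\<in>cball 0 (4 * \<rho>). {x + y})" unfolding K'_def by blast
      have vK': "convex K'" unfolding eqK' using convex_sums[OF vK convex_cball[of 0 "4 * \<rho>"]] .
      have KK': "K \<subseteq> K'" unfolding K'_def using \<rho> by force
      have mK': "measure lebesgue K \<le> measure lebesgue K'"
        using KK' cK' Kf by (intro measure_mono_fmeasurable) (auto simp: lmeasurable_compact fmeasurableD)
      then have pos': "0 < measure lebesgue K'" using pos by linarith
      define g where "g S = (if S \<subseteq> K' then measure lebesgue S else 0)" for S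
      have per: "(\<Sum>V\<in>subfam W (K \<inter> S). measure lebesgue V)
                   \<le> F * A * measure lebesgue K * g S / measure lebesgue K'" if S: "S \<in> Tr" for S
      proof (cases "subfam W (K \<inter> S) = {}")
        case True
        then show ?thesis using F0 A0 pos' by (simp add: g_def)
      next
        case False
        then obtain V0 where V0: "V0 \<in> W" "V0 \<subseteq> K" "V0 \<subseteq> S" by (auto simp: subfam_def)
        obtain a b where ab: "dist a b = 1" "closed_segment a b \<subseteq> V0" using cW V0(1) by blast
        obtain c d where cd: "dist c d = 1" "S = {x. infdist x (closed_segment c d) \<le> \<rho>}"
          using tT S unfolding tube_def by blast
        have "a \<in> S" "b \<in> S" using ab V0 by auto
        then have "S \<subseteq> K'" unfolding K'_def cd(2)
          using ab V0 cd \<rho> by (intro tube_sub[OF ab(1) cd(1)]) auto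
        then have gS: "g S = measure lebesgue S" by (simp add: g_def)
        have cKS: "compact (K \<inter> S)" "convex (K \<inter> S)"
          using cK vK tube_facts[of \<rho> S] tT S \<rho> by (auto intro: compact_Int convex_Int)
        have sumF: "(\<Sum>V\<in>subfam W (K \<inter> S). measure lebesgue V) \<le> F * measure lebesgue (K \<inter> S)"
        proof (cases "measure lebesgue (K \<inter> S) = 0")
          case True
          have "(\<Sum>V\<in>subfam W (K \<inter> S). measure lebesgue V) \<le> (\<Sum>V\<in>subfam W (K \<inter> S). 0)"
            using Wm cKS True
            by (intro sum_mono) (metis (no_types, lifting) lmeasurable_compact measure_mono_fmeasurable mem_Collect_eq subfam_def)
          then show ?thesis using True by simp
        next
          case False
          then have posS: "0 < measure lebesgue (K \<inter> S)" using measure_nonneg[of lebesgue "K \<inter> S"] by linarith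
          have "Delta (subfam W S) (K \<inter> S) \<le> Delta_max (subfam W S)"
            using finW Wm cKS by (intro Delta_le_max) (auto simp: subfam_def)
          also have "\<dots> \<le> F" using F S by blast
          finally show ?thesis using posS unfolding Delta_def subfam_subfam by (simp add: divide_le_eq)
        qed
        also have "\<dots> \<le> F * (A * measure lebesgue K * measure lebesgue S / measure lebesgue K')"
        proof (intro mult_left_mono F0)
          show "measure lebesgue (K \<inter> S) \<le> A * measure lebesgue K * measure lebesgue S / measure lebesgue K'"
            using per_tube_RS[OF cK vK \<rho> cd] pos' unfolding A_def K'_def by (simp add: le_divide_eq)
        qed
        finally show ?thesis using gS by simp
      qed
      have "(\<Sum>V\<in>subfam W K. measure lebesgue V)
            \<le> (\<Sum>V\<in>subfam W K. \<Sum>S\<in>Tr. if V \<subseteq> S then measure lebesgue V else 0)"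
      proof (intro sum_mono)
        fix V assume V: "V \<in> subfam W K"
        then obtain S0 where S0: "S0 \<in> Tr" "V \<subseteq> S0" using cov by (auto simp: subfam_def)
        have "measure lebesgue V = (if V \<subseteq> S0 then measure lebesgue V else 0)" using S0 by simp
        also have "\<dots> \<le> (\<Sum>S\<in>Tr. if V \<subseteq> S then measure lebesgue V else 0)"
          using finT S0(1) by (intro member_le_sum) auto
        finally show "measure lebesgue V \<le> (\<Sum>S\<in>Tr. if V \<subseteq> S then measure lebesgue V else 0)" .
      qed
      also have "\<dots> = (\<Sum>S\<in>Tr. \<Sum>V\<in>subfam W K. if V \<subseteq> S then measure lebesgue V else 0)"
        by (rule sum.swap)
      also have "\<dots> = (\<Sum>S\<in>Tr. \<Sum>V\<in>subfam W (K \<inter> S). measure lebesgue V)"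
      proof (rule sum.cong[OF refl])
        fix S assume "S \<in> Tr"
        have "subfam W (K \<inter> S) = {V \<in> subfam W K. V \<subseteq> S}" by (auto simp: subfam_def)
        then show "(\<Sum>V\<in>subfam W K. if V \<subseteq> S then measure lebesgue V else 0) = (\<Sum>V\<in>subfam W (K \<inter> S). measure lebesgue V)"
          using finW by (simp add: sum.inter_filter subfam_def) (intro sum.cong, auto)
      qed
      also have "\<dots> \<le> (\<Sum>S\<in>Tr. F * A * measure lebesgue K * g S / measure lebesgue K')"
        using per by (intro sum_mono) auto
      also have "\<dots> = F * A * measure lebesgue K / measure lebesgue K' * (\<Sum>S\<in>Tr. g S)"
        by (simp add: sum_distrib_left sum_divide_distrib)
      also have "(\<Sum>S\<in>Tr. g S) = (\<Sum>S\<in>subfam Tr K'. measure lebesgue S)"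
        unfolding g_def using finT by (simp add: sum.inter_filter subfam_def)
      also have "\<dots> = Delta Tr K' * measure lebesgue K'"
        using pos' by (simp add: Delta_def)
      also have "F * A * measure lebesgue K / measure lebesgue K' * (Delta Tr K' * measure lebesgue K')
                 = F * A * measure lebesgue K * Delta Tr K'"
        using pos' by simp
      also have "\<dots> \<le> F * A * measure lebesgue K * Delta_max Tr"
        using Delta_le_max[OF finT Tm vK'] F0 A0 pos by (intro mult_left_mono) auto
      finally show ?thesis by (simp add: A_def mult_ac)
    qed
  qed
qed

lemma near_comparable:
  fixes c d c' d' :: "'a::euclidean_space"
  assumes "dist c c' \<le> e" "dist d d' \<le> e"
  shows "{x. infdist x (closed_segment c d) \<le> r} \<subseteq>
           {x. infdist x {x. infdist x (closed_segment c' d') \<le> r} \<le> e}"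
proof
  fix x assume "x \<in> {x. infdist x (closed_segment c d) \<le> r}"
  then have "infdist x (closed_segment c d) \<le> r" by simp
  then obtain y where y: "y \<in> closed_segment c d" "dist x y \<le> r" using mem_nb by blast
  then obtain u where u: "0 \<le> u" "u \<le> 1" "y = (1 - u) *\<^sub>R c + u *\<^sub>R d"
    unfolding closed_segment_def by blast
  define y' where "y' = (1 - u) *\<^sub>R c' + u *\<^sub>R d'"
  have y'seg: "y' \<in> closed_segment c' d'" unfolding y'_def closed_segment_def using u by blast
  have "dist y y' = norm ((1 - u) *\<^sub>R (c - c') + u *\<^sub>R (d - d'))"
    unfolding u(3) y'_def dist_norm by (simp add: algebra_simps)
  also have "\<dots> \<le> (1 - u) * norm (c - c') + u * norm (d - d')"
    using norm_triangle_ineq[of "(1 - u) *\<^sub>R (c - c')" "u *\<^sub>R (d - d')"] u by simp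
  also have "\<dots> \<le> (1 - u) * e + u * e"
    using assms u by (intro add_mono mult_left_mono) (auto simp: dist_norm)
  also have "\<dots> = e" by (simp add: algebra_simps)
  finally have dyy: "dist y y' \<le> e" .
  define x' where "x' = x + (y' - y)"
  have "dist x' y' = dist x y" unfolding x'_def dist_norm by (simp add: algebra_simps)
  then have "infdist x' (closed_segment c' d') \<le> r" using y y'seg mem_nb by fastforce
  moreover have "dist x x' \<le> e" unfolding x'_def using dyy by (simp add: dist_norm norm_minus_commute)
  ultimately show "x \<in> {x. infdist x {x. infdist x (closed_segment c' d') \<le> r} \<le> e}"
    by (auto intro: infdist_le2)
qed

lemma packing:
  "\<exists>P::nat. \<forall>Tr :: 'a::euclidean_space set set.
     finite Tr \<and> (\<forall>S\<in>Tr. tube 1 S \<and> S \<inter> ball 0 1 \<noteq> {}) \<and> ess_distinct 1 Tr \<longrightarrow> card Tr \<le> P"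
proof -
  have cov: "cball (0::'a) 3 \<subseteq> (\<Union>c\<in>cball 0 3. ball c (1/2))"
  proof
    fix x :: 'a assume "x \<in> cball 0 3"
    moreover have "x \<in> ball x (1/2)" by simp
    ultimately show "x \<in> (\<Union>c\<in>cball 0 3. ball c (1/2))" by blast
  qed
  obtain F :: "'a set" where F: "F \<subseteq> cball 0 3" "finite F" "cball 0 3 \<subseteq> (\<Union>f\<in>F. ball f (1/2))"
    using compactE_image[OF compact_cball _ cov] by auto
  define \<phi> where "\<phi> p = (SOME f. f \<in> F \<and> p \<in> ball f (1/2))" for p
  have \<phi>: "\<phi> p \<in> F \<and> p \<in> ball (\<phi> p) (1/2)" if "p \<in> cball 0 3" for p
  proof -
    have "p \<in> (\<Union>f\<in>F. ball f (1/2))" using F(3) that by (rule subsetD)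
    then obtain f where "f \<in> F" "p \<in> ball f (1/2)" by (rule UN_E)
    then have "\<exists>f. f \<in> F \<and> p \<in> ball f (1/2)" by (intro exI conjI)
    then show ?thesis unfolding \<phi>_def by (rule someI_ex)
  qed
  show ?thesis
  proof (intro exI[of _ "card (F \<times> F)"] allI impI)
    fix Tr :: "'a set set"
    assume H: "finite Tr \<and> (\<forall>S\<in>Tr. tube 1 S \<and> S \<inter> ball 0 1 \<noteq> {}) \<and> ess_distinct 1 Tr"
    define ep :: "'a set \<Rightarrow> 'a \<times> 'a" where "ep S = (SOME p. dist (fst p) (snd p) = 1 \<and> S = {x. infdist x (closed_segment (fst p) (snd p)) \<le> 1})" for S
    have ep: "dist (fst (ep S)) (snd (ep S)) = 1 \<and> S = {x. infdist x (closed_segment (fst (ep S)) (snd (ep S))) \<le> 1}"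
      if "S \<in> Tr" for S
    proof -
      have H2: "\<forall>S\<in>Tr. tube 1 S \<and> S \<inter> ball 0 1 \<noteq> {}" using H by (rule conjE) (erule conjE)
      have "tube 1 S" using H2 that by blast
      then obtain a b where ab: "dist a b = 1" "S = {x. infdist x (closed_segment a b) \<le> 1}"
        unfolding tube_def by blast
      let ?P = "\<lambda>p. dist (fst p) (snd p) = 1 \<and> S = {x. infdist x (closed_segment (fst p) (snd p)) \<le> 1}"
      have "?P (a, b)" using ab by (simp only: fst_conv snd_conv)
      then have "?P (SOME p. ?P p)" by (rule someI)
      then show ?thesis unfolding ep_def .
    qed
    have inball: "fst (ep S) \<in> cball 0 3 \<and> snd (ep S) \<in> cball 0 3" if S: "S \<in> Tr" for S
    proof -
      have "S \<inter> ball 0 1 \<noteq> {}" using H S by blast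
      then obtain x where x: "x \<in> S" "norm x < 1" by auto
      have eS: "S = {x. infdist x (closed_segment (fst (ep S)) (snd (ep S))) \<le> 1}" using ep[OF S] by (rule conjunct2)
      have "x \<in> {x. infdist x (closed_segment (fst (ep S)) (snd (ep S))) \<le> 1}" using x(1) eS by metis
      then have "infdist x (closed_segment (fst (ep S)) (snd (ep S))) \<le> 1" by simp
      then obtain y where y: "y \<in> closed_segment (fst (ep S)) (snd (ep S))" "dist x y \<le> 1" using mem_nb by blast
      have d1: "dist (fst (ep S)) (snd (ep S)) = 1" using ep[OF S] by (rule conjunct1)
      have "dist y (fst (ep S)) \<le> 1" "dist y (snd (ep S)) \<le> 1"
        using dist_in_closed_segment[OF y(1)] d1 by auto
      moreover have tri: "norm p \<le> norm x + dist x y + dist y p" for p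
      proof -
        have "dist p 0 \<le> dist p x + dist x 0" by (rule dist_triangle)
        moreover have "dist p x \<le> dist p y + dist y x" by (rule dist_triangle)
        ultimately show ?thesis by (simp add: dist_commute)
      qed
      ultimately have "norm (fst (ep S)) \<le> 3" "norm (snd (ep S)) \<le> 3"
        using x(2) y(2) tri[of "fst (ep S)"] tri[of "snd (ep S)"] by linarith+
      then show ?thesis by simp
    qed
    define \<psi> where "\<psi> S = (\<phi> (fst (ep S)), \<phi> (snd (ep S)))" for S
    have inj: "inj_on \<psi> Tr"
    proof (rule inj_onI)
      fix S S' assume S: "S \<in> Tr" and S': "S' \<in> Tr" and eq: "\<psi> S = \<psi> S'"
      define c where "c = fst (ep S)"
      define d where "d = snd (ep S)"
      define c' where "c' = fst (ep S')"
      define d' where "d' = snd (ep S')"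
      have e1: "\<phi> c = \<phi> c'" "\<phi> d = \<phi> d'" using eq by (auto simp: \<psi>_def c_def d_def c'_def d'_def)
      have i1: "c \<in> cball 0 3" "d \<in> cball 0 3" using inball[OF S] by (auto simp: c_def d_def)
      have i2: "c' \<in> cball 0 3" "d' \<in> cball 0 3" using inball[OF S'] by (auto simp: c'_def d'_def)
      have "dist (\<phi> c) c < 1/2" "dist (\<phi> c') c' < 1/2" "dist (\<phi> d) d < 1/2" "dist (\<phi> d') d' < 1/2"
        using \<phi>[OF i1(1)] \<phi>[OF i1(2)] \<phi>[OF i2(1)] \<phi>[OF i2(2)] by auto
      then have dc: "dist c c' \<le> 1" "dist d d' \<le> 1"
        using e1 dist_triangle[of c c' "\<phi> c"] dist_triangle[of d d' "\<phi> d"]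
          dist_commute[of c "\<phi> c"] dist_commute[of d "\<phi> d"] by auto
      have eS: "S = {x. infdist x (closed_segment c d) \<le> 1}" using ep[OF S] unfolding c_def d_def by blast
      have eS': "S' = {x. infdist x (closed_segment c' d') \<le> 1}" using ep[OF S'] unfolding c'_def d'_def by blast
      have dc': "dist c' c \<le> 1" "dist d' d \<le> 1" using dc by (auto simp: dist_commute)
      have n1: "{x. infdist x (closed_segment c d) \<le> 1} \<subseteq> {x. infdist x {x. infdist x (closed_segment c' d') \<le> 1} \<le> 1}"
        by (rule near_comparable[OF dc])
      have n2: "{x. infdist x (closed_segment c' d') \<le> 1} \<subseteq> {x. infdist x {x. infdist x (closed_segment c d) \<le> 1} \<le> 1}"
        by (rule near_comparable[OF dc'])
      have "comparable 1 S S'"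
        unfolding comparable_def eS eS' using n1 n2 by (rule conjI)
      then show "S = S'" using H S S' unfolding ess_distinct_def by blast
    qed
    have "\<psi> ` Tr \<subseteq> F \<times> F" using \<phi> inball by (auto simp: \<psi>_def)
    then show "card Tr \<le> card (F \<times> F)" using card_inj_on_le[OF inj] F(2) by blast
  qed
qed

lemma rho_anti:
  fixes \<rho> :: "nat \<Rightarrow> real"
  assumes mono: "\<forall>k<M. \<rho> (Suc k) \<le> \<rho> k" and "j \<le> M"
  shows "\<rho> M \<le> \<rho> j"
  using assms(2)
proof (induction "M - j" arbitrary: j)
  case 0 then show ?case by simp
next
  case (Suc n)
  then have "Suc j \<le> M" "n = M - Suc j" by auto
  then have "\<rho> M \<le> \<rho> (Suc j)" using Suc.hyps(1) by blast
  also have "\<rho> (Suc j) \<le> \<rho> j" using mono \<open>Suc j \<le> M\<close> by auto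
  finally show ?case .
qed

lemma Delta_max_empty: "Delta_max {} \<le> 0"
  by (rule Delta_max_le) (simp add: Delta_def subfam_def)

theorem lemma7p4:
  fixes K :: real
  assumes "K \<ge> 1"
  shows "\<exists>C>0. \<forall>(TT :: 'a::euclidean_space set set) (\<delta>::real) (M::nat)
            (\<rho> :: nat \<Rightarrow> real) (Tr :: nat \<Rightarrow> 'a set set).
    finite TT \<and> 0 < \<delta> \<and> (\<forall>T\<in>TT. tube \<delta> T \<and> T \<subseteq> ball 0 1) \<and>
    \<rho> M = \<delta> \<and> \<rho> 0 = 1 \<and> (\<forall>k<M. \<rho> (Suc k) \<le> \<rho> k) \<and>
    (\<forall>k\<le>M. finite (Tr k) \<and> (\<forall>S\<in>Tr k. tube (\<rho> k) S) \<and>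
       TT = (\<Union>S\<in>Tr k. subfam TT S) \<and>
       ess_distinct (\<rho> k) (Tr k) \<and>
       (\<forall>T\<in>TT. real (card {S\<in>Tr k. T \<subseteq> S}) \<le> K) \<and>
       (\<forall>S1\<in>Tr k. \<forall>S2\<in>Tr k. real (card (subfam TT S1)) \<le> K * real (card (subfam TT S2)))) \<and>
    (\<forall>k\<in>{1..M}. \<forall>S\<in>Tr k. \<exists>S'\<in>Tr (k - 1). S \<subseteq> S')
    \<longrightarrow> Delta_max TT \<le> C ^ M * (\<Prod>m=1..M.
           Max (insert 0 ((\<lambda>S. Delta_max (subfam (Tr m) S)) ` Tr (m - 1))))"
proof -
  obtain P :: nat where P: "\<forall>Tr :: 'a set set.
     finite Tr \<and> (\<forall>S\<in>Tr. tube 1 S \<and> S \<inter> ball 0 1 \<noteq> {}) \<and> ess_distinct 1 Tr \<longrightarrow> card Tr \<le> P"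
    using packing by blast
  define P' :: real where "P' = real (max P 1)"
  define A :: real where "A = 16 ^ DIM('a)"
  have P'1: "1 \<le> P'" by (simp add: P'_def)
  have A1: "1 \<le> A" by (simp add: A_def)
  show ?thesis
  proof (intro exI[of _ "P' * A"] conjI allI impI)
    show "0 < P' * A" using P'1 A1 by simp
  next
    fix TT :: "'a set set" and \<delta> :: real and M :: nat and \<rho> :: "nat \<Rightarrow> real" and Tr :: "nat \<Rightarrow> 'a set set"
    assume H: "finite TT \<and> 0 < \<delta> \<and> (\<forall>T\<in>TT. tube \<delta> T \<and> T \<subseteq> ball 0 1) \<and>
    \<rho> M = \<delta> \<and> \<rho> 0 = 1 \<and> (\<forall>k<M. \<rho> (Suc k) \<le> \<rho> k) \<and>
    (\<forall>k\<le>M. finite (Tr k) \<and> (\<forall>S\<in>Tr k. tube (\<rho> k) S) \<and>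
       TT = (\<Union>S\<in>Tr k. subfam TT S) \<and>
       ess_distinct (\<rho> k) (Tr k) \<and>
       (\<forall>T\<in>TT. real (card {S\<in>Tr k. T \<subseteq> S}) \<le> K) \<and>
       (\<forall>S1\<in>Tr k. \<forall>S2\<in>Tr k. real (card (subfam TT S1)) \<le> K * real (card (subfam TT S2)))) \<and>
    (\<forall>k\<in>{1..M}. \<forall>S\<in>Tr k. \<exists>S'\<in>Tr (k - 1). S \<subseteq> S')"
    have finTT: "finite TT" using H by (elim conjE) assumption
    have \<delta>0: "0 < \<delta>" using H by (elim conjE) assumption
    have TTt: "\<forall>T\<in>TT. tube \<delta> T \<and> T \<subseteq> ball 0 1" using H by (elim conjE) assumption
    have \<rho>M: "\<rho> M = \<delta>" using H by (elim conjE) assumption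
    have \<rho>0: "\<rho> 0 = 1" using H by (elim conjE) assumption
    have mono: "\<forall>k<M. \<rho> (Suc k) \<le> \<rho> k" using H by (elim conjE) assumption
    have lev: "\<forall>k\<le>M. finite (Tr k) \<and> (\<forall>S\<in>Tr k. tube (\<rho> k) S) \<and>
       TT = (\<Union>S\<in>Tr k. subfam TT S) \<and>
       ess_distinct (\<rho> k) (Tr k) \<and>
       (\<forall>T\<in>TT. real (card {S\<in>Tr k. T \<subseteq> S}) \<le> K) \<and>
       (\<forall>S1\<in>Tr k. \<forall>S2\<in>Tr k. real (card (subfam TT S1)) \<le> K * real (card (subfam TT S2)))"
      using H by (elim conjE) assumption
    have nest: "\<forall>k\<in>{1..M}. \<forall>S\<in>Tr k. \<exists>S'\<in>Tr (k - 1). S \<subseteq> S'" using H by (elim conjE) assumption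
    define Fm where "Fm m = Max (insert 0 ((\<lambda>S. Delta_max (subfam (Tr m) S)) ` Tr (m - 1)))" for m
    have finTr: "finite (Tr k)" if "k \<le> M" for k using lev that by blast
    have tTr: "\<forall>S\<in>Tr k. tube (\<rho> k) S" if "k \<le> M" for k using lev that by blast
    have \<rho>pos: "0 < \<rho> k" if "k \<le> M" for k using rho_anti[OF mono that] \<rho>M \<delta>0 by linarith
    have Fm0: "0 \<le> Fm m" if "m \<le> M" for m
    proof -
      have "finite (insert 0 ((\<lambda>S. Delta_max (subfam (Tr m) S)) ` Tr (m - 1)))"
        using finTr[of "m - 1"] that by simp
      then show ?thesis unfolding Fm_def by (rule Max_ge) simp
    qed
    have Fmge: "Delta_max (subfam (Tr m) S) \<le> Fm m" if "m \<le> M" "S \<in> Tr (m - 1)" for m S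
    proof -
      have "finite (insert 0 ((\<lambda>S. Delta_max (subfam (Tr m) S)) ` Tr (m - 1)))"
        using finTr[of "m - 1"] that by simp
      then show ?thesis unfolding Fm_def by (rule Max_ge) (use that in simp)
    qed
    have prod0: "0 \<le> (\<Prod>m=1..M. Fm m)" using Fm0 by (intro prod_nonneg) auto
    have goal_eq: "(\<Prod>m=1..M. Max (insert 0 ((\<lambda>S. Delta_max (subfam (Tr m) S)) ` Tr (m - 1)))) = (\<Prod>m=1..M. Fm m)"
      by (simp add: Fm_def)
    show "Delta_max TT \<le> (P' * A) ^ M * (\<Prod>m=1..M. Max (insert 0 ((\<lambda>S. Delta_max (subfam (Tr m) S)) ` Tr (m - 1))))"
    proof (cases "TT = {}")
      case True
      then show ?thesis unfolding goal_eq using Delta_max_empty prod0 P'1 A1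
        by (smt (verit) mult_nonneg_nonneg zero_le_power)
    next
      case False
      then obtain T0 where T0: "T0 \<in> TT" by blast
      have M1: "1 \<le> M"
      proof (rule ccontr)
        assume "\<not> 1 \<le> M"
        then have "M = 0" by simp
        then have "\<delta> = 1" using \<rho>M \<rho>0 by simp
        then show False using TTt T0 tube1_not_in_ball by blast
      qed
      have lev0: "TT = (\<Union>S\<in>Tr 0. subfam TT S)" "\<forall>S1\<in>Tr 0. \<forall>S2\<in>Tr 0. real (card (subfam TT S1)) \<le> K * real (card (subfam TT S2))"
        "ess_distinct 1 (Tr 0)" "\<forall>S\<in>Tr 0. tube 1 S"
        using lev \<rho>0 by auto
      obtain S1 where S1: "S1 \<in> Tr 0" "T0 \<in> subfam TT S1" using lev0(1) T0 by blast
      have c1: "1 \<le> card (subfam TT S1)"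
        using S1(2) finTT by (metis One_nat_def Suc_leI card_gt_0_iff empty_iff finite_subset mem_Collect_eq subfam_def subsetI)
      have meet: "S \<inter> ball 0 1 \<noteq> {}" if S: "S \<in> Tr 0" for S
      proof -
        have "1 \<le> K * real (card (subfam TT S))" using lev0(2) S1(1) S c1 by (smt (verit) of_nat_1 of_nat_mono)
        then have "card (subfam TT S) \<noteq> 0" by (metis mult_zero_right not_one_le_zero of_nat_0)
        then have "subfam TT S \<noteq> {}" by (metis card.empty)
        then obtain T where "T \<in> subfam TT S" by blast
        then have T: "T \<in> TT" "T \<subseteq> S" by (simp_all add: subfam_def)
        obtain a b where "dist a b = 1" "closed_segment a b \<subseteq> T"
          using tube_facts(5)[of \<delta> T] TTt T(1) \<delta>0 by auto
        then have "a \<in> T" by auto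
        then show ?thesis using T TTt by blast
      qed
      have "card (Tr 0) \<le> P" using P finTr[of 0] lev0(3,4) meet by blast
      have D0: "Delta_max (Tr 0) \<le> P'"
      proof (rule Delta_max_le)
        fix K0 :: "'a set" assume "convex K0"
        have "Delta (Tr 0) K0 \<le> real (card (Tr 0))"
          using finTr[of 0] tube_facts(3)[of 1] lev0(4) by (intro Delta_le_card) auto
        also have "\<dots> \<le> P'" using \<open>card (Tr 0) \<le> P\<close> by (simp add: P'_def)
        finally show "Delta (Tr 0) K0 \<le> P'" .
      qed
      have chain: "Delta_max (Tr m) \<le> P' * A ^ m * (\<Prod>i=1..m. Fm i)" if "m \<le> M" for m
        using that
      proof (induction m)
        case 0 then show ?case using D0 by simp
      next
        case (Suc m)
        have mM: "m \<le> M" using Suc.prems by simp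
        have "Delta_max (Tr (Suc m)) \<le> 16 ^ DIM('a) * Delta_max (Tr m) * Fm (Suc m)"
        proof (rule two_scale)
          show "finite (Tr (Suc m))" using finTr Suc.prems by blast
          show "finite (Tr m)" using finTr mM by blast
          show "\<forall>V\<in>Tr (Suc m). compact V \<and> (\<exists>a b. dist a b = 1 \<and> closed_segment a b \<subseteq> V)"
          proof
            fix V assume V: "V \<in> Tr (Suc m)"
            have tV: "tube (\<rho> (Suc m)) V" using tTr[OF Suc.prems] V by blast
            have r0: "0 \<le> \<rho> (Suc m)" using \<rho>pos[OF Suc.prems] by simp
            show "compact V \<and> (\<exists>a b. dist a b = 1 \<and> closed_segment a b \<subseteq> V)"
              using tube_facts(1)[OF tV r0] tube_facts(5)[OF tV r0] by blast
          qed
          show "\<forall>S\<in>Tr m. tube (\<rho> m) S" using tTr[OF mM] .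
          show "0 < \<rho> m" using \<rho>pos[OF mM] .
          show "\<forall>V\<in>Tr (Suc m). \<exists>S\<in>Tr m. V \<subseteq> S"
          proof
            fix V assume V: "V \<in> Tr (Suc m)"
            have "Suc m \<in> {1..M}" using Suc.prems by simp
            then have "\<forall>S\<in>Tr (Suc m). \<exists>S'\<in>Tr (Suc m - 1). S \<subseteq> S'" using nest by blast
            then show "\<exists>S\<in>Tr m. V \<subseteq> S" using V by simp
          qed
          show "\<forall>S\<in>Tr m. Delta_max (subfam (Tr (Suc m)) S) \<le> Fm (Suc m)"
            using Fmge[OF Suc.prems] by simp
          show "0 \<le> Fm (Suc m)" using Fm0[OF Suc.prems] .
        qed
        also have "\<dots> \<le> A * (P' * A ^ m * (\<Prod>i=1..m. Fm i)) * Fm (Suc m)"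
          unfolding A_def[symmetric] using Suc.IH[OF mM] A1 Fm0[OF Suc.prems]
          by (intro mult_right_mono mult_left_mono) auto
        also have "\<dots> = P' * A ^ Suc m * (\<Prod>i=1..Suc m. Fm i)"
          by (simp add: prod.cl_ivl_Suc mult_ac)
        finally show ?case .
      qed
      have sub: "TT \<subseteq> Tr M"
      proof
        fix T assume T: "T \<in> TT"
        have "TT = (\<Union>S\<in>Tr M. subfam TT S)" using lev by blast
        then obtain S where S: "S \<in> Tr M" "T \<subseteq> S" using T by (auto simp: subfam_def)
        have "tube \<delta> S" using tTr[of M] S(1) \<rho>M by auto
        then obtain c d where cd: "dist c d = 1" "S = {x. infdist x (closed_segment c d) \<le> \<delta>}"
          unfolding tube_def by blast
        obtain a b where ab: "dist a b = 1" "T = {x. infdist x (closed_segment a b) \<le> \<delta>}"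
          using TTt T unfolding tube_def by blast
        have "T = S" using tube_eq[OF \<delta>0 ab(1) cd(1)] S(2) unfolding ab(2) cd(2) by blast
        then show "T \<in> Tr M" using S(1) by simp
      qed
      have fM: "finite (Tr M)" using finTr by simp
      have r0: "0 \<le> \<rho> M" using \<rho>pos[of M] by simp
      have mM: "\<forall>V\<in>Tr M. V \<in> sets lebesgue" using tTr[of M] tube_facts(3)[of "\<rho> M", OF _ r0] by blast
      have "Delta_max TT \<le> Delta_max (Tr M)" using Delta_max_mono[OF fM mM sub] .
      also have "\<dots> \<le> P' * A ^ M * (\<Prod>i=1..M. Fm i)" using chain by simp
      also have "\<dots> \<le> (P' * A) ^ M * (\<Prod>i=1..M. Fm i)"
      proof (intro mult_right_mono prod0)
        have "P' \<le> P' ^ M" using P'1 M1 by (simp add: power_increasing[of 1 M P', simplified])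
        then show "P' * A ^ M \<le> (P' * A) ^ M" using A1 by (simp add: power_mult_distrib)
      qed
      finally show ?thesis unfolding goal_eq .
    qed
  qed
qed

end
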